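(* There is an absolute constant $c>0$ such that for every positive integer $s$ and all real $0<a<b$, there exist probability distributions $P$ and $Q$ supported on $[a,b]$ such that $\int x^\ell\,dP(x)=\int x^\ell\,dQ(x)$ for $\ell=0,1,\dots,s$, and $$\Big|\int_a^b \Big|x-\tfrac{a+b}{2}\Big|\,dP(x)-\int_a^b\Big|x-\tfrac{a+b}{2}\Big|\,dQ(x)\Big|\ \ge\ c\,\frac{b-a}{s}.$$ *)

theory Defs
  imports "HOL-Probability.Probability"
begin

end

theory Submission imports Defs begin

definition th :: "nat \<Rightarrow> real" where "th s = pi / (4 * real s)"
definition CC :: "nat \<Rightarrow> int \<Rightarrow> nat \<Rightarrow> complex" where
  "CC s m j = cis (real_of_int m * (real j * th s))"

lemma CC_mult: "CC s m j * CC s n j = CC s (m + n) j"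
  by (simp add: CC_def cis_mult algebra_simps)

lemma geo:
  assumes s: "s > 0" and nd: "\<not> ((8 * int s) dvd (m::int))"
  shows "(\<Sum>j<8 * s. CC s m j) = 0"
proof -
  define \<rho> where "\<rho> = cis (real_of_int m * th s)"
  have eq: "CC s m j = \<rho> ^ j" for j
    unfolding CC_def \<rho>_def Complex.DeMoivre by (simp add: ac_simps)
  have r1: "\<rho> ^ (8 * s) = 1"
  proof -
    have "\<rho> ^ (8 * s) = cis (2 * pi * real_of_int m)"
      using s by (simp add: \<rho>_def Complex.DeMoivre th_def field_simps)
    also have "\<dots> = 1" by (rule cis_multiple_2pi) simp
    finally show ?thesis .
  qed
  have r2: "\<rho> \<noteq> 1"
  proof
    assume "\<rho> = 1"
    then have "cos (real_of_int m * th s) = 1"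
      using \<rho>_def by (metis cis.sel(1) one_complex.sel(1))
    then obtain n :: int where n: "real_of_int m * th s = real_of_int n * 2 * pi"
      by (auto simp: cos_one_2pi_int)
    then have "real_of_int m = real_of_int n * 8 * real s"
      using s by (simp add: th_def field_simps)
    then have "real_of_int m = real_of_int (n * 8 * int s)" by simp
    then have "m = n * 8 * int s" by (simp only: of_int_eq_iff)
    then show False using nd by (simp add: ac_simps)
  qed
  have "(\<Sum>j<8 * s. CC s m j) = (\<Sum>j<8 * s. \<rho> ^ j)" by (simp add: eq)
  also have "\<dots> = 0" using geometric_sum[OF r2, of "8 * s"] r1 by simp
  finally show ?thesis .
qed

lemma geo0: "(\<Sum>j<8 * s. CC s 0 j) = of_nat (8 * s)"
  by (simp add: CC_def)


definition Kw :: "nat \<Rightarrow> nat \<Rightarrow> real" where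
  "Kw s j = (cmod (\<Sum>a<2 * s. CC s (int a) j))^2"
definition xs :: "nat \<Rightarrow> nat \<Rightarrow> real" where
  "xs s j = sin (real j * th s)"

lemma CC_pow: "CC s m j ^ i = CC s (int i * m) j"
  unfolding CC_def Complex.DeMoivre by (simp add: ac_simps)

lemma CC_cnj: "cnj (CC s m j) = CC s (- m) j"
  unfolding CC_def cis_cnj by simp

lemma sgn_CC: assumes "s > 0" shows "complex_of_real (-1) ^ j = CC s (int (4 * s)) j"
proof -
  have "CC s (int (4 * s)) j = cis pi ^ j"
    using assms unfolding CC_def Complex.DeMoivre th_def by (simp add: field_simps)
  then show ?thesis by simp
qed

lemma K_CC: "complex_of_real (Kw s j) = (\<Sum>a<2 * s. CC s (int a) j) * (\<Sum>b<2 * s. CC s (- int b) j)"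
  unfolding Kw_def complex_norm_square cnj_sum CC_cnj by simp

lemma x_CC: "complex_of_real (xs s j) = (CC s 1 j - CC s (-1) j) / (2 * \<i>)"
proof -
  have "CC s 1 j - CC s (-1) j = 2 * \<i> * complex_of_real (xs s j)"
    unfolding xs_def CC_def by (simp add: complex_eq_iff)
  then show ?thesis by simp
qed

lemma pow_CC: "(CC s 1 j - CC s (-1) j) ^ k =
   (\<Sum>i\<le>k. of_nat (k choose i) * (-1) ^ (k - i) * CC s (2 * int i - int k) j)"
proof -
  have "(CC s 1 j - CC s (-1) j) ^ k = (CC s 1 j + (- CC s (-1) j)) ^ k" by simp
  also have "\<dots> = (\<Sum>i\<le>k. of_nat (k choose i) * CC s 1 j ^ i * (- CC s (-1) j) ^ (k - i))"
    by (rule binomial_ring)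
  also have "\<dots> = (\<Sum>i\<le>k. of_nat (k choose i) * (-1) ^ (k - i) * CC s (2 * int i - int k) j)"
  proof (rule sum.cong[OF refl])
    fix i assume "i \<in> {..k}"
    then have ik: "i \<le> k" by simp
    have e1: "CC s 1 j ^ i = CC s (int i) j" by (simp only: CC_pow mult_1_right)
    have e2: "(- CC s (-1) j) ^ (k - i) = (-1) ^ (k - i) * CC s (- int (k - i)) j"
      using power_minus[of "CC s (-1) j" "k - i"] by (simp only: CC_pow mult_minus1_right)
    have e3: "int i + - int (k - i) = 2 * int i - int k" using ik by (simp add: of_nat_diff)
    have "CC s 1 j ^ i * (- CC s (-1) j) ^ (k - i) = (-1) ^ (k - i) * CC s (2 * int i - int k) j"
      unfolding e1 e2 by (simp only: mult.left_commute[of "CC s (int i) j"] CC_mult e3)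
    then show "of_nat (k choose i) * CC s 1 j ^ i * (- CC s (-1) j) ^ (k - i) =
        of_nat (k choose i) * (-1) ^ (k - i) * CC s (2 * int i - int k) j"
      by (simp add: mult.assoc)
  qed
  finally show ?thesis .
qed

lemma triple_distrib:
  fixes c :: complex
  shows "c * ((\<Sum>a\<in>A. f a) * (\<Sum>b\<in>B. g b)) * (\<Sum>i\<in>I. h i) =
    (\<Sum>a\<in>A. \<Sum>b\<in>B. \<Sum>i\<in>I. c * f a * g b * h i)"
proof -
  have "c * ((\<Sum>a\<in>A. f a) * (\<Sum>b\<in>B. g b)) = (\<Sum>a\<in>A. \<Sum>b\<in>B. c * f a * g b)"
    by (subst sum_product) (simp add: sum_distrib_left mult.assoc)
  then have "c * ((\<Sum>a\<in>A. f a) * (\<Sum>b\<in>B. g b)) * (\<Sum>i\<in>I. h i)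
     = (\<Sum>a\<in>A. \<Sum>b\<in>B. c * f a * g b * (\<Sum>i\<in>I. h i))"
    by (simp add: sum_distrib_right)
  also have "\<dots> = (\<Sum>a\<in>A. \<Sum>b\<in>B. \<Sum>i\<in>I. c * f a * g b * h i)"
    by (simp add: sum_distrib_left)
  finally show ?thesis .
qed

lemma term_CC:
  assumes "s > 0"
  shows "complex_of_real ((-1)^j * Kw s j * xs s j ^ k) =
    (\<Sum>a<2 * s. \<Sum>b<2 * s. \<Sum>i\<le>k. of_nat (k choose i) * (-1) ^ (k - i) *
        CC s (int (4 * s) + int a - int b + 2 * int i - int k) j) / (2 * \<i>) ^ k"
proof -
  have "complex_of_real ((-1)^j * Kw s j * xs s j ^ k) =
     CC s (int (4 * s)) j * ((\<Sum>a<2 * s. CC s (int a) j) * (\<Sum>b<2 * s. CC s (- int b) j))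
      * (\<Sum>i\<le>k. of_nat (k choose i) * (-1) ^ (k - i) * CC s (2 * int i - int k) j) / (2 * \<i>) ^ k"
    apply (simp only: of_real_mult of_real_power)
    unfolding sgn_CC[OF assms] K_CC x_CC power_divide pow_CC by (simp only: times_divide_eq_right)
  also have "\<dots> = (\<Sum>a<2 * s. \<Sum>b<2 * s. \<Sum>i\<le>k. CC s (int (4 * s)) j * CC s (int a) j * CC s (- int b) j *
        (of_nat (k choose i) * (-1) ^ (k - i) * CC s (2 * int i - int k) j)) / (2 * \<i>) ^ k"
    unfolding triple_distrib ..
  also have "\<dots> = (\<Sum>a<2 * s. \<Sum>b<2 * s. \<Sum>i\<le>k. of_nat (k choose i) * (-1) ^ (k - i) *
        CC s (int (4 * s) + int a - int b + 2 * int i - int k) j) / (2 * \<i>) ^ k"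
  proof -
    have "CC s (int (4 * s)) j * CC s (int a) j * CC s (- int b) j *
        (of_nat (k choose i) * (-1) ^ (k - i) * CC s (2 * int i - int k) j) =
        of_nat (k choose i) * (-1) ^ (k - i) * CC s (int (4 * s) + int a - int b + 2 * int i - int k) j"
      for a b i
    proof -
      have "CC s (int (4 * s)) j * CC s (int a) j * CC s (- int b) j * CC s (2 * int i - int k) j
          = CC s (int (4 * s) + int a - int b + 2 * int i - int k) j"
      proof -
        have "CC s (int (4 * s)) j * CC s (int a) j * CC s (- int b) j * CC s (2 * int i - int k) j
          = CC s (int (4 * s) + int a + - int b + (2 * int i - int k)) j"
          by (simp only: CC_mult)
        also have "int (4 * s) + int a + - int b + (2 * int i - int k) = int (4 * s) + int a - int b + 2 * int i - int k"
          by simp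
        finally show ?thesis .
      qed
      moreover have "CC s (int (4 * s)) j * CC s (int a) j * CC s (- int b) j *
        (of_nat (k choose i) * (-1) ^ (k - i) * CC s (2 * int i - int k) j) =
        of_nat (k choose i) * (-1) ^ (k - i) * (CC s (int (4 * s)) j * CC s (int a) j * CC s (- int b) j * CC s (2 * int i - int k) j)"
        by (simp only: ac_simps)
      ultimately show ?thesis by simp
    qed
    then show ?thesis by (simp only:)
  qed
  finally show ?thesis .
qed

lemma swap4:
  "(\<Sum>j\<in>J. \<Sum>a\<in>A. \<Sum>b\<in>B. \<Sum>i\<in>I. f a b i j) = (\<Sum>a\<in>A. \<Sum>b\<in>B. \<Sum>i\<in>I. \<Sum>j\<in>J. f a b i j)"
proof -
  have "(\<Sum>j\<in>J. \<Sum>a\<in>A. \<Sum>b\<in>B. \<Sum>i\<in>I. f a b i j) = (\<Sum>a\<in>A. \<Sum>j\<in>J. \<Sum>b\<in>B. \<Sum>i\<in>I. f a b i j)"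
    by (rule sum.swap)
  also have "\<dots> = (\<Sum>a\<in>A. \<Sum>b\<in>B. \<Sum>j\<in>J. \<Sum>i\<in>I. f a b i j)"
    by (rule sum.cong[OF refl], rule sum.swap)
  also have "\<dots> = (\<Sum>a\<in>A. \<Sum>b\<in>B. \<Sum>i\<in>I. \<Sum>j\<in>J. f a b i j)"
    by (rule sum.cong[OF refl], rule sum.cong[OF refl], rule sum.swap)
  finally show ?thesis .
qed

lemma moment0:
  assumes s: "s > 0" and k: "k \<le> s"
  shows "(\<Sum>j<8 * s. (-1)^j * Kw s j * xs s j ^ k) = 0"
proof -
  have "complex_of_real (\<Sum>j<8 * s. (-1)^j * Kw s j * xs s j ^ k) =
    (\<Sum>j<8 * s. (\<Sum>a<2 * s. \<Sum>b<2 * s. \<Sum>i\<le>k. of_nat (k choose i) * (-1) ^ (k - i) *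
        CC s (int (4 * s) + int a - int b + 2 * int i - int k) j) / (2 * \<i>) ^ k)"
    unfolding of_real_sum using term_CC[OF s] by simp
  also have "\<dots> = (\<Sum>a<2 * s. \<Sum>b<2 * s. \<Sum>i\<le>k. of_nat (k choose i) * (-1) ^ (k - i) *
        (\<Sum>j<8 * s. CC s (int (4 * s) + int a - int b + 2 * int i - int k) j)) / (2 * \<i>) ^ k"
    unfolding sum_divide_distrib[symmetric] by (subst swap4) (simp only: sum_distrib_left)
  also have "\<dots> = 0"
  proof -
    have "(\<Sum>j<8 * s. CC s (int (4 * s) + int a - int b + 2 * int i - int k) j) = 0"
      if "a < 2 * s" "b < 2 * s" "i \<le> k" for a b i
    proof (rule geo[OF s])
      let ?e = "int (4 * s) + int a - int b + 2 * int i - int k"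
      have "0 < ?e" "?e < 8 * int s" using that k by linarith+
      then show "\<not> 8 * int s dvd ?e" by (auto dest: zdvd_imp_le)
    qed
    then show ?thesis by simp
  qed
  finally have "complex_of_real (\<Sum>j<8 * s. (-1)^j * Kw s j * xs s j ^ k) = 0" .
  then show ?thesis by (simp only: of_real_eq_0_iff)
qed

lemma mass:
  assumes s: "s > 0"
  shows "(\<Sum>j<8 * s. Kw s j) = 16 * real s ^ 2"
proof -
  have "complex_of_real (\<Sum>j<8 * s. Kw s j) = (\<Sum>j<8 * s. \<Sum>a<2 * s. \<Sum>b<2 * s. CC s (int a - int b) j)"
    unfolding of_real_sum K_CC sum_product by (simp add: CC_mult)
  also have "\<dots> = (\<Sum>a<2 * s. \<Sum>b<2 * s. \<Sum>j<8 * s. CC s (int a - int b) j)"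
    by (subst sum.swap) (rule sum.cong[OF refl], rule sum.swap)
  also have "\<dots> = (\<Sum>a<2 * s. \<Sum>b<2 * s. if a = b then of_nat (8 * s) else 0)"
  proof (intro sum.cong refl)
    fix a b assume ab: "a \<in> {..<2 * s}" "b \<in> {..<2 * s}"
    show "(\<Sum>j<8 * s. CC s (int a - int b) j) = (if a = b then of_nat (8 * s) else 0)"
    proof (cases "a = b")
      case True then show ?thesis using geo0 by simp
    next
      case False
      have "\<not> 8 * int s dvd (int a - int b)"
      proof
        assume "8 * int s dvd (int a - int b)"
        then have "\<bar>8 * int s\<bar> \<le> \<bar>int a - int b\<bar>" using False by (intro dvd_imp_le_int) auto
        then show False using ab by auto
      qed
      then show ?thesis using geo[OF s] False by simp
    qed
  qed
  also have "\<dots> = complex_of_real (16 * real s ^ 2)"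
    by (simp add: power2_eq_square)
  finally show ?thesis by (simp only: of_real_eq_iff)
qed

lemma CC_refl:
  assumes s: "s > 0" and i: "i \<le> 8 * s"
  shows "CC s m (8 * s - i) = cnj (CC s m i)"
proof -
  have "real_of_int m * (real (8 * s - i) * th s) = 2 * pi * real_of_int m + (- (real_of_int m * (real i * th s)))"
    using s i by (simp add: of_nat_diff th_def field_simps)
  then show ?thesis
    unfolding CC_def cis_cnj by (simp only: cis_mult[symmetric]) simp
qed

lemma Kw_refl:
  assumes s: "s > 0" and i: "i \<le> 8 * s"
  shows "Kw s (8 * s - i) = Kw s i"
  unfolding Kw_def CC_refl[OF s i] cnj_sum[symmetric] complex_mod_cnj ..

lemma xs_refl:
  assumes s: "s > 0" and i: "i \<le> 8 * s"
  shows "xs s (8 * s - i) = - xs s i"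
proof -
  have "real (8 * s - i) * th s = 2 * pi - real i * th s"
    using s i by (simp add: of_nat_diff th_def field_simps)
  then show ?thesis unfolding xs_def by (simp add: sin_diff)
qed

lemma cmod_cis_1: "cmod (cis x - 1) ^ 2 = 4 * sin (x / 2) ^ 2"
proof -
  have "cmod (cis x - 1) ^ 2 = (cos x - 1)^2 + sin x ^ 2" by (simp add: cmod_power2)
  also have "\<dots> = 2 - 2 * cos x" by (simp add: power2_eq_square algebra_simps sin_squared_eq)
  also have "cos x = 1 - 2 * sin (x/2) ^ 2" using cos_double_sin[of "x/2"] by simp
  finally show ?thesis by simp
qed

lemma Kw_closed:
  assumes s: "s > 0" and j: "1 \<le> j" "j \<le> 4 * s"
  shows "Kw s j = sin (real j * pi / 4) ^ 2 / sin (real j * pi / (8 * real s)) ^ 2"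
proof -
  define \<phi> where "\<phi> = real j * th s"
  have \<phi>pos: "0 < \<phi>" "\<phi> \<le> pi" using s j by (auto simp: \<phi>_def th_def field_simps)
  have ne: "cis \<phi> \<noteq> 1"
  proof
    assume "cis \<phi> = 1"
    then have "cos \<phi> = 1" by (metis cis.sel(1) one_complex.sel(1))
    moreover have "cos \<phi> < cos 0" using \<phi>pos by (intro cos_monotone_0_pi) auto
    ultimately show False by simp
  qed
  have "(\<Sum>a<2 * s. CC s (int a) j) = (\<Sum>a<2 * s. cis \<phi> ^ a)"
    unfolding CC_def Complex.DeMoivre \<phi>_def by simp
  also have "\<dots> = (cis \<phi> ^ (2 * s) - 1) / (cis \<phi> - 1)" by (rule geometric_sum[OF ne])
  also have "\<dots> = (cis (real (2 * s) * \<phi>) - 1) / (cis \<phi> - 1)" by (simp only: Complex.DeMoivre)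
  finally have sumeq: "(\<Sum>a<2 * s. CC s (int a) j) = (cis (real (2 * s) * \<phi>) - 1) / (cis \<phi> - 1)" .
  have "Kw s j = cmod (cis (real (2 * s) * \<phi>) - 1) ^ 2 / cmod (cis \<phi> - 1) ^ 2"
    unfolding Kw_def sumeq norm_divide power_divide ..
  also have "\<dots> = sin (real (2 * s) * \<phi> / 2) ^ 2 / sin (\<phi> / 2) ^ 2"
    unfolding cmod_cis_1 by simp
  also have "real (2 * s) * \<phi> / 2 = real j * pi / 4" using s by (simp add: \<phi>_def th_def field_simps)
  also have "\<phi> / 2 = real j * pi / (8 * real s)" using s by (simp add: \<phi>_def th_def field_simps)
  finally show ?thesis .
qed
lemma Gident:
  fixes a t :: real
  assumes t: "0 < t" "t < a" "a + t < pi / 2"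
  shows "cos (a - t) / sin (a - t) + cos (a + t) / sin (a + t) - 2 * (cos a / sin a) =
    2 * cos a * sin t ^ 2 / (sin a * (sin a ^ 2 - sin t ^ 2))"
    and "0 < sin a ^ 2 - sin t ^ 2"
proof -
  have p1: "0 < sin (a - t)" using t by (intro sin_gt_zero) auto
  have p2: "0 < sin (a + t)" using t by (intro sin_gt_zero) auto
  have p3: "0 < sin a" using t by (intro sin_gt_zero) auto
  have "sin (a - t) * sin (a + t) = sin a ^ 2 * cos t ^ 2 - cos a ^ 2 * sin t ^ 2"
    by (simp add: sin_add sin_diff power2_eq_square algebra_simps)
  also have "\<dots> = sin a ^ 2 * (1 - sin t ^ 2) - (1 - sin a ^ 2) * sin t ^ 2"
    by (simp add: cos_squared_eq)
  also have "\<dots> = sin a ^ 2 - sin t ^ 2" by algebra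
  finally have h1: "sin (a - t) * sin (a + t) = sin a ^ 2 - sin t ^ 2" .
  have h2: "cos (a - t) * sin (a + t) + cos (a + t) * sin (a - t) = 2 * sin a * cos a"
  proof -
    have "sin ((a + t) + (a - t)) = sin (a + t) * cos (a - t) + cos (a + t) * sin (a - t)"
      by (rule sin_add)
    moreover have "sin ((a + t) + (a - t)) = 2 * sin a * cos a"
    proof -
      have "(a + t) + (a - t) = 2 * a" by simp
      then show ?thesis using sin_double[of a] by simp
    qed
    ultimately show ?thesis by (simp add: mult.commute)
  qed
  show pos: "0 < sin a ^ 2 - sin t ^ 2" using h1 p1 p2 by (metis mult_pos_pos)
  have "cos (a - t) / sin (a - t) + cos (a + t) / sin (a + t) =
     (cos (a - t) * sin (a + t) + cos (a + t) * sin (a - t)) / (sin (a - t) * sin (a + t))"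
    using p1 p2 by (simp add: field_simps)
  also have "\<dots> = 2 * sin a * cos a / (sin a ^ 2 - sin t ^ 2)" unfolding h1 h2 ..
  finally have e: "cos (a - t) / sin (a - t) + cos (a + t) / sin (a + t) = 2 * sin a * cos a / (sin a ^ 2 - sin t ^ 2)" .
  show "cos (a - t) / sin (a - t) + cos (a + t) / sin (a + t) - 2 * (cos a / sin a) =
    2 * cos a * sin t ^ 2 / (sin a * (sin a ^ 2 - sin t ^ 2))"
    unfolding e using pos p3 by (simp add: field_simps power2_eq_square)
qed

lemma Gnonneg:
  fixes a t :: real
  assumes t: "0 < t" "t < a" "a + t < pi / 2"
  shows "0 \<le> cos (a - t) / sin (a - t) + cos (a + t) / sin (a + t) - 2 * (cos a / sin a)"
proof -
  have "0 < sin a" using t by (intro sin_gt_zero) auto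
  moreover have "0 \<le> cos a" using t by (intro cos_ge_zero) auto
  ultimately show ?thesis unfolding Gident(1)[OF t] using Gident(2)[OF t] by simp
qed

lemma sin_lower: fixes t :: real assumes "0 \<le> t" "t \<le> 1" shows "t / 2 \<le> sin t"
proof -
  have "\<bar>sin t - (\<Sum>m<3. sin_coeff m * t ^ m)\<bar> \<le> inverse (fact 3) * \<bar>t\<bar> ^ 3"
    by (rule Maclaurin_sin_bound)
  then have "\<bar>sin t - t\<bar> \<le> t ^ 3 / 6" using assms
    by (simp add: sin_coeff_def eval_nat_numeral fact_numeral)
  moreover have "t ^ 3 \<le> t"
  proof -
    have tt: "t * t \<le> 1" using assms by (intro mult_le_one) auto
    show ?thesis using mult_right_mono[OF tt assms(1)] by (simp add: power3_eq_cube)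
  qed
  ultimately show ?thesis by linarith
qed

lemma Gfirst:
  fixes t :: real
  assumes t: "0 < t" "t \<le> pi / 8"
  shows "1 / (32 * t) \<le> cos t / sin t + cos (3 * t) / sin (3 * t) - 2 * (cos (2 * t) / sin (2 * t))"
proof -
  have t3: "0 < t" "t < 2 * t" "2 * t + t < pi / 2" using t pi_gt3 by auto
  have eqs: "2 * t - t = t" "2 * t + t = 3 * t" by auto
  note I = Gident[OF t3, unfolded eqs]
  have c2: "1 / 2 \<le> cos (2 * t)"
  proof -
    have "cos (pi / 3) \<le> cos (2 * t)" using t by (intro cos_monotone_0_pi_le) auto
    then show ?thesis by (simp add: cos_60)
  qed
  have t1: "t \<le> 1" using t pi_less_4 by linarith
  have st: "t / 2 \<le> sin t" using sin_lower[of t] t1 t by simp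
  have s2: "sin (2 * t) \<le> 2 * t" using sin_x_le_x t by simp
  have s2p: "0 < sin (2 * t)" using t3 by (intro sin_gt_zero) auto
  have sq2: "sin (2 * t) ^ 2 \<le> (2 * t) ^ 2" using s2 s2p by (intro power_mono) auto
  have sqt: "0 \<le> sin t ^ 2" by simp
  have e4: "(2 * t) ^ 2 = 4 * t ^ 2" by (simp add: power_mult_distrib)
  have d: "sin (2 * t) ^ 2 - sin t ^ 2 \<le> 4 * t ^ 2" using sq2 sqt e4 by linarith
  have n1: "(t / 2) ^ 2 \<le> sin t ^ 2" using st t by (intro power_mono) auto
  have n2: "(t / 2) ^ 2 = t ^ 2 / 4" by (simp add: power_divide)
  have n3: "1 * sin t ^ 2 \<le> (2 * cos (2 * t)) * sin t ^ 2" using c2 sqt by (intro mult_right_mono) auto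
  have num: "t ^ 2 / 4 \<le> 2 * cos (2 * t) * sin t ^ 2" using n1 n2 n3 by linarith
  have num0: "0 \<le> 2 * cos (2 * t) * sin t ^ 2" using n3 sqt by linarith
  have den: "sin (2 * t) * (sin (2 * t) ^ 2 - sin t ^ 2) \<le> 2 * t * (4 * t ^ 2)"
    using s2 d I(2) s2p t by (intro mult_mono) auto
  have den0: "0 < sin (2 * t) * (sin (2 * t) ^ 2 - sin t ^ 2)" using s2p I(2) by (rule mult_pos_pos)
  have "1 / (32 * t) = (t ^ 2 / 4) / (2 * t * (4 * t ^ 2))" using t by (simp add: field_simps power2_eq_square)
  also have "\<dots> \<le> (2 * cos (2 * t) * sin t ^ 2) / (sin (2 * t) * (sin (2 * t) ^ 2 - sin t ^ 2))"
    using num0 num den0 den by (rule frac_le)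
  also have "\<dots> = cos t / sin t + cos (3 * t) / sin (3 * t) - 2 * (cos (2 * t) / sin (2 * t))"
    using I(1) by (simp only:)
  finally show ?thesis .
qed
definition Fv :: "nat \<Rightarrow> nat \<Rightarrow> real" where
  "Fv s j = (-1)^j * Kw s j * \<bar>xs s j\<bar>"

lemma sum_split_add: fixes n m :: nat shows "(\<Sum>j<n + m. g j) = (\<Sum>j<n. g j) + (\<Sum>j<m. g (n + j))"
  by (induct m) (auto simp: add.assoc)

lemma F_refl:
  assumes s: "s > 0" and i: "i \<le> 8 * s"
  shows "Fv s (8 * s - i) = Fv s i"
proof -
  have "(-1::real) ^ (8 * s - i) = (-1) ^ i" using i by (simp add: minus_one_power_iff)
  then show ?thesis unfolding Fv_def Kw_refl[OF s i] xs_refl[OF s i] by simp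
qed

lemma F0: "Fv s 0 = 0" by (simp add: Fv_def xs_def)

lemma F4s: assumes s: "s > 0" shows "Fv s (4 * s) = 0"
proof -
  have "real (4 * s) * th s = pi" using s by (simp add: th_def)
  then show ?thesis by (simp add: Fv_def xs_def)
qed

lemma S_half:
  assumes s: "s > 0"
  shows "(\<Sum>j<8 * s. Fv s j) = 2 * (\<Sum>j<4 * s. Fv s (Suc j))"
proof -
  have A: "(\<Sum>j<4 * s. Fv s j) = (\<Sum>j<4 * s. Fv s (Suc j))"
  proof -
    have "(\<Sum>j<Suc (4 * s). Fv s j) = (\<Sum>j<4 * s. Fv s j) + Fv s (4 * s)" by (rule sum.lessThan_Suc)
    moreover have "(\<Sum>j<Suc (4 * s). Fv s j) = Fv s 0 + (\<Sum>j<4 * s. Fv s (Suc j))" by (rule sum.lessThan_Suc_shift)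
    ultimately show ?thesis using F0 F4s[OF s] by simp
  qed
  have B: "(\<Sum>j<4 * s. Fv s (4 * s + j)) = (\<Sum>j<4 * s. Fv s (Suc j))"
  proof -
    have "(\<Sum>j<4 * s. Fv s (4 * s + j)) = (\<Sum>j<4 * s. Fv s (4 * s + (4 * s - Suc j)))"
      by (rule sum.nat_diff_reindex[symmetric])
    also have "\<dots> = (\<Sum>j<4 * s. Fv s (Suc j))"
    proof (rule sum.cong[OF refl])
      fix j assume "j \<in> {..<4 * s}"
      then have j: "Suc j \<le> 8 * s" "4 * s + (4 * s - Suc j) = 8 * s - Suc j" by auto
      show "Fv s (4 * s + (4 * s - Suc j)) = Fv s (Suc j)" unfolding j(2) by (rule F_refl[OF s j(1)])
    qed
    finally show ?thesis .
  qed
  have "(\<Sum>j<8 * s. Fv s j) = (\<Sum>j<4 * s + 4 * s. Fv s j)" by simp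
  also have "\<dots> = (\<Sum>j<4 * s. Fv s j) + (\<Sum>j<4 * s. Fv s (4 * s + j))" by (rule sum_split_add)
  finally show ?thesis using A B by simp
qed

lemma blocks:
  "(\<Sum>j<4 * s. g (Suc j)) = (\<Sum>q<s. g (4 * q + 1) + g (4 * q + 2) + g (4 * q + 3) + g (4 * q + 4))"
proof -
  have "(\<Sum>j<4 * s. g (Suc j)) = (\<Sum>j<s * 4. g (Suc j))" by (simp add: mult.commute)
  also have "\<dots> = (\<Sum>q<s. \<Sum>j\<in>{q * 4..<q * 4 + 4}. g (Suc j))" by (rule sum.nat_group[symmetric])
  also have "\<dots> = (\<Sum>q<s. g (4 * q + 1) + g (4 * q + 2) + g (4 * q + 3) + g (4 * q + 4))"
  proof (rule sum.cong[OF refl])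
    fix q :: nat
    have "{q * 4..<q * 4 + 4} = {q * 4, q * 4 + 1, q * 4 + 2, q * 4 + 3}" by auto
    then show "(\<Sum>j\<in>{q * 4..<q * 4 + 4}. g (Suc j)) = g (4 * q + 1) + g (4 * q + 2) + g (4 * q + 3) + g (4 * q + 4)"
      by (simp add: ac_simps numeral_3_eq_3 eval_nat_numeral)
  qed
  finally show ?thesis .
qed

lemma F_val:
  assumes s: "s > 0" and j: "1 \<le> j" "j \<le> 4 * s"
  shows "Fv s j = (-1)^j * sin (real j * pi / 4) ^ 2 *
     (2 * (cos (real j * pi / (8 * real s)) / sin (real j * pi / (8 * real s))))"
proof -
  define u where "u = real j * pi / (8 * real s)"
  have u: "0 < u" "u \<le> pi / 2" using s j by (auto simp: u_def field_simps)
  have su: "0 < sin u" using u by (intro sin_gt_zero) auto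
  have cu: "0 \<le> cos u" using u by (intro cos_ge_zero) auto
  have "real j * th s = 2 * u" using s by (simp add: th_def u_def field_simps)
  then have x: "\<bar>xs s j\<bar> = 2 * sin u * cos u" using su cu by (simp add: xs_def sin_double)
  show ?thesis
    unfolding Fv_def Kw_closed[OF s j] x u_def[symmetric] using su
    by (simp add: field_simps power2_eq_square)
qed

lemma neg1sq: "((-1::real) ^ q) ^ 2 = 1"
  by (induct q) (auto simp: power2_eq_square)

lemma sinsq: "sin (real (4 * q + r) * pi / 4) ^ 2 = sin (real r * pi / 4) ^ 2"
proof -
  have "sin (real (4 * q + r) * pi / 4) = sin (real q * pi + real r * pi / 4)"
    by (rule arg_cong[where f=sin]) (simp add: field_simps)
  also have "\<dots> = (-1) ^ q * sin (real r * pi / 4)"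
    by (simp only: sin_add sin_npi cos_npi) 
  finally have "sin (real (4 * q + r) * pi / 4) = (-1) ^ q * sin (real r * pi / 4)" .
  then show ?thesis by (simp add: power_mult_distrib neg1sq)
qed

lemma sin_vals:
  "sin (real 1 * pi / 4) ^ 2 = 1 / 2" "sin (real 2 * pi / 4) ^ 2 = 1"
  "sin (real 3 * pi / 4) ^ 2 = 1 / 2" "sin (real 4 * pi / 4) ^ 2 = 0"
proof -
  show "sin (real 1 * pi / 4) ^ 2 = 1 / 2" by (simp add: sin_45 power_divide)
  show "sin (real 2 * pi / 4) ^ 2 = 1" by simp
  have "sin (real 3 * pi / 4) = sin (pi - pi / 4)" by (rule arg_cong[where f=sin]) simp
  also have "\<dots> = sqrt 2 / 2" by (simp only: sin_pi_minus sin_45)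
  finally have h: "sin (real 3 * pi / 4) = sqrt 2 / 2" .
  show "sin (real 3 * pi / 4) ^ 2 = 1 / 2" unfolding h by (simp add: power_divide)
  show "sin (real 4 * pi / 4) ^ 2 = 0" by simp
qed

definition Gc :: "real \<Rightarrow> real" where "Gc x = cos x / sin x"

lemma block_val:
  assumes s: "s > 0" and q: "q < s"
  defines "t \<equiv> pi / (8 * real s)"
  shows "Fv s (4 * q + 1) + Fv s (4 * q + 2) + Fv s (4 * q + 3) + Fv s (4 * q + 4) =
    - (Gc (real (4 * q + 2) * t - t) + Gc (real (4 * q + 2) * t + t) - 2 * Gc (real (4 * q + 2) * t))"
proof -
  have r: "real j * pi / (8 * real s) = real j * t" for j using s by (simp add: t_def)
  have v1: "Fv s (4 * q + 1) = - Gc (real (4 * q + 1) * t)"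
  proof -
    have b: "1 \<le> 4 * q + 1" "4 * q + 1 \<le> 4 * s" using q by auto
    have "Fv s (4 * q + 1) = (-1)^(4 * q + 1) * sin (real (4 * q + 1) * pi / 4) ^ 2 * (2 * Gc (real (4 * q + 1) * t))"
      using F_val[OF s b] unfolding r Gc_def .
    then show ?thesis unfolding sinsq[of q 1] sin_vals by simp
  qed
  have v2: "Fv s (4 * q + 2) = 2 * Gc (real (4 * q + 2) * t)"
  proof -
    have b: "1 \<le> 4 * q + 2" "4 * q + 2 \<le> 4 * s" using q by auto
    have "Fv s (4 * q + 2) = (-1)^(4 * q + 2) * sin (real (4 * q + 2) * pi / 4) ^ 2 * (2 * Gc (real (4 * q + 2) * t))"
      using F_val[OF s b] unfolding r Gc_def .
    then show ?thesis unfolding sinsq[of q 2] sin_vals by simp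
  qed
  have v3: "Fv s (4 * q + 3) = - Gc (real (4 * q + 3) * t)"
  proof -
    have b: "1 \<le> 4 * q + 3" "4 * q + 3 \<le> 4 * s" using q by auto
    have "Fv s (4 * q + 3) = (-1)^(4 * q + 3) * sin (real (4 * q + 3) * pi / 4) ^ 2 * (2 * Gc (real (4 * q + 3) * t))"
      using F_val[OF s b] unfolding r Gc_def .
    then show ?thesis unfolding sinsq[of q 3] sin_vals by simp
  qed
  have v4: "Fv s (4 * q + 4) = 0"
  proof -
    have b: "1 \<le> 4 * q + 4" "4 * q + 4 \<le> 4 * s" using q by auto
    have "Fv s (4 * q + 4) = (-1)^(4 * q + 4) * sin (real (4 * q + 4) * pi / 4) ^ 2 * (2 * Gc (real (4 * q + 4) * t))"
      using F_val[OF s b] unfolding r Gc_def .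
    then show ?thesis unfolding sinsq[of q 4] sin_vals by simp
  qed
  have e1: "real (4 * q + 1) * t = real (4 * q + 2) * t - t" by (simp add: algebra_simps)
  have e3: "real (4 * q + 3) * t = real (4 * q + 2) * t + t" by (simp add: algebra_simps)
  show ?thesis unfolding v1 v2 v3 v4 e1 e3 by simp
qed

lemma S_bound:
  assumes s: "s > 0"
  shows "(\<Sum>j<8 * s. Fv s j) \<le> - real s / (2 * pi)"
proof -
  define t where "t = pi / (8 * real s)"
  define b where "b q = Fv s (4 * q + 1) + Fv s (4 * q + 2) + Fv s (4 * q + 3) + Fv s (4 * q + 4)" for q
  have t0: "0 < t" using s by (simp add: t_def)
  have bq: "b q = - (Gc (real (4 * q + 2) * t - t) + Gc (real (4 * q + 2) * t + t) - 2 * Gc (real (4 * q + 2) * t))"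
    if "q < s" for q
    unfolding b_def t_def by (rule block_val[OF s that])
  have bneg: "b q \<le> 0" if q: "q < s" for q
  proof -
    have c1: "t < real (4 * q + 2) * t" using t0 by simp
    have "real (4 * q + 3) < 4 * real s" using q by linarith
    then have "real (4 * q + 3) * t < 4 * real s * t" using t0 by (intro mult_strict_right_mono) auto
    also have "4 * real s * t = pi / 2" using s by (simp add: t_def)
    finally have c2: "real (4 * q + 2) * t + t < pi / 2" by (simp add: algebra_simps)
    show ?thesis unfolding bq[OF q] Gc_def using Gnonneg[OF t0 c1 c2] by simp
  qed
  have b0: "b 0 \<le> - (1 / (32 * t))"
  proof -
    have tle: "t \<le> pi / 8" using s by (simp add: t_def field_simps)
    have e: "real (4 * 0 + 2) * t - t = t" "real (4 * 0 + 2) * t + t = 3 * t" "real (4 * (0::nat) + 2) * t = 2 * t"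
      by auto
    show ?thesis unfolding bq[OF s] e Gc_def using Gfirst[OF t0 tle] by simp
  qed
  have "(\<Sum>q<s. b q) = b 0 + (\<Sum>q\<in>{..<s} - {0}. b q)"
    using s by (subst sum.remove[of _ 0]) auto
  also have "\<dots> \<le> b 0 + 0"
    using bneg by (intro add_left_mono sum_nonpos) auto
  finally have sb: "(\<Sum>q<s. b q) \<le> - (1 / (32 * t))" using b0 by simp
  have "(\<Sum>j<8 * s. Fv s j) = 2 * (\<Sum>q<s. b q)"
    unfolding S_half[OF s] blocks b_def ..
  also have "\<dots> \<le> 2 * (- (1 / (32 * t)))" using sb by simp
  also have "\<dots> = - real s / (2 * pi)" using s by (simp add: t_def field_simps)
  finally show ?thesis .
qed

lemma disc:
  fixes w y :: "nat \<Rightarrow> real"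
  assumes nn: "\<And>j. 0 \<le> w j" and z0: "\<forall>j\<ge>N. w j = 0"
    and one: "(\<Sum>j<N. w j) = 1" and yab: "\<And>j. y j \<in> {a..b}"
  shows "prob_space (distr (measure_pmf (embed_pmf w)) borel y)"
    "sets (distr (measure_pmf (embed_pmf w)) borel y) = sets borel"
    "measure (distr (measure_pmf (embed_pmf w)) borel y) {a..b} = 1"
    and "\<And>f. f \<in> borel_measurable borel \<Longrightarrow>
      (\<integral>x. f x \<partial>distr (measure_pmf (embed_pmf w)) borel y) = (\<Sum>j<N. w j * f (y j))"
proof -
  have z: "\<And>j. N \<le> j \<Longrightarrow> w j = 0" using z0 by simp
  define P where "P = distr (measure_pmf (embed_pmf w)) borel y"
  have int1: "(\<integral>\<^sup>+x. ennreal (w x) \<partial>count_space UNIV) = 1"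
  proof -
    have "(\<integral>\<^sup>+x. ennreal (w x) \<partial>count_space UNIV) = (\<Sum>x<N. ennreal (w x))"
      using z by (intro nn_integral_count_space') auto
    also have "\<dots> = ennreal (\<Sum>x<N. w x)" using nn by simp
    finally show ?thesis using one by simp
  qed
  have pm: "pmf (embed_pmf w) j = w j" for j using pmf_embed_pmf[of w, OF nn int1] .
  have meas: "y \<in> measurable (measure_pmf (embed_pmf w)) borel" by simp
  show "prob_space (distr (measure_pmf (embed_pmf w)) borel y)" unfolding P_def
    by (rule prob_space.prob_space_distr[OF prob_space_measure_pmf meas])
  show "sets (distr (measure_pmf (embed_pmf w)) borel y) = sets borel" by simp
  have "measure P {a..b} = measure (measure_pmf (embed_pmf w)) (y -` {a..b} \<inter> space (measure_pmf (embed_pmf w)))"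
    unfolding P_def by (rule measure_distr[OF meas]) simp
  also have "y -` {a..b} \<inter> space (measure_pmf (embed_pmf w)) = space (measure_pmf (embed_pmf w))"
    using yab by auto
  also have "measure (measure_pmf (embed_pmf w)) (space (measure_pmf (embed_pmf w))) = 1"
    by (rule prob_space.prob_space[OF prob_space_measure_pmf])
  finally show "measure (distr (measure_pmf (embed_pmf w)) borel y) {a..b} = 1" unfolding P_def .
  fix f :: "real \<Rightarrow> real" assume f: "f \<in> borel_measurable borel"
  have "(\<integral>x. f x \<partial>P) = (\<integral>x. f (y x) \<partial>measure_pmf (embed_pmf w))"
    unfolding P_def by (rule integral_distr[OF meas f])
  also have "\<dots> = (\<Sum>j\<in>{..<N}. f (y j) * pmf (embed_pmf w) j)"
  proof (rule integral_measure_pmf_real)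
    fix j assume "j \<in> set_pmf (embed_pmf w)"
    then have "w j \<noteq> 0" by (simp add: set_pmf_iff pm)
    then show "j \<in> {..<N}" using z by (meson lessThan_iff not_le)
  qed simp
  also have "\<dots> = (\<Sum>j<N. w j * f (y j))" by (simp add: pm mult.commute)
  finally show "(\<integral>x. f x \<partial>distr (measure_pmf (embed_pmf w)) borel y) = (\<Sum>j<N. w j * f (y j))" unfolding P_def .
qed

lemma momy:
  assumes s: "s > 0" and l: "l \<le> s"
  shows "(\<Sum>j<8 * s. (-1)^j * Kw s j * (m + h * xs s j) ^ l) = 0"
proof -
  have "(\<Sum>j<8 * s. (-1)^j * Kw s j * (m + h * xs s j) ^ l) =
    (\<Sum>j<8 * s. \<Sum>k\<le>l. of_nat (l choose k) * h ^ k * m ^ (l - k) * ((-1)^j * Kw s j * xs s j ^ k))"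
  proof (rule sum.cong[OF refl])
    fix j
    have "(m + h * xs s j) ^ l = (h * xs s j + m) ^ l" by (simp add: add.commute)
    also have "\<dots> = (\<Sum>k\<le>l. of_nat (l choose k) * (h * xs s j) ^ k * m ^ (l - k))"
      by (rule binomial_ring)
    finally show "(-1)^j * Kw s j * (m + h * xs s j) ^ l =
      (\<Sum>k\<le>l. of_nat (l choose k) * h ^ k * m ^ (l - k) * ((-1)^j * Kw s j * xs s j ^ k))"
      by (simp add: sum_distrib_left power_mult_distrib ac_simps)
  qed
  also have "\<dots> = (\<Sum>k\<le>l. of_nat (l choose k) * h ^ k * m ^ (l - k) * (\<Sum>j<8 * s. (-1)^j * Kw s j * xs s j ^ k))"
    by (subst sum.swap) (simp add: sum_distrib_left)
  also have "\<dots> = 0" using moment0[OF s] l by simp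
  finally show ?thesis .
qed

lemma main:
  assumes s: "0 < s" and ab: "a < (b::real)"
  shows "\<exists>P Q :: real measure.
         prob_space P \<and> prob_space Q \<and>
         sets P = sets borel \<and> sets Q = sets borel \<and>
         measure P {a..b} = 1 \<and> measure Q {a..b} = 1 \<and>
         (\<forall>l\<le>s. (\<integral>x. x ^ l \<partial>P) = (\<integral>x. x ^ l \<partial>Q)) \<and>
         \<bar>(\<integral>x\<in>{a..b}. \<bar>x - (a + b) / 2\<bar> \<partial>P) - (\<integral>x\<in>{a..b}. \<bar>x - (a + b) / 2\<bar> \<partial>Q)\<bar>
           \<ge> 1 / 128 * (b - a) / real s"
proof -
  define m where "m = (a + b) / 2"
  define h where "h = (b - a) / 2"
  define y where "y j = m + h * xs s j" for j
  define D where "D = 16 * real s ^ 2"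
  define wP where "wP j = (if j < 8 * s then (Kw s j + (-1)^j * Kw s j) / D else 0)" for j
  define wQ where "wQ j = (if j < 8 * s then (Kw s j - (-1)^j * Kw s j) / D else 0)" for j
  have h0: "0 < h" using ab by (simp add: h_def)
  have D0: "0 < D" using s by (simp add: D_def)
  have Kn: "0 \<le> Kw s j" for j by (simp add: Kw_def)
  have pm: "- Kw s j \<le> (-1)^j * Kw s j \<and> (-1)^j * Kw s j \<le> Kw s j" for j
    using Kn[of j] by (simp add: minus_one_power_iff)
  have wPn: "0 \<le> wP j" for j using pm[of j] D0 by (simp add: wP_def)
  have wQn: "0 \<le> wQ j" for j using pm[of j] D0 by (simp add: wQ_def)
  have wPz: "\<forall>j\<ge>8 * s. wP j = 0" by (simp add: wP_def)
  have wQz: "\<forall>j\<ge>8 * s. wQ j = 0" by (simp add: wQ_def)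
  have alt0: "(\<Sum>j<8 * s. (-1)^j * Kw s j) = 0" using moment0[OF s, of 0] by simp
  have tot: "(\<Sum>j<8 * s. Kw s j) = D" using mass[OF s] by (simp add: D_def)
  have wP1: "(\<Sum>j<8 * s. wP j) = 1"
  proof -
    have "(\<Sum>j<8 * s. wP j) = (\<Sum>j<8 * s. Kw s j + (-1)^j * Kw s j) / D"
      by (simp add: wP_def sum_divide_distrib)
    also have "\<dots> = 1" using alt0 tot D0 by (simp add: sum.distrib)
    finally show ?thesis .
  qed
  have wQ1: "(\<Sum>j<8 * s. wQ j) = 1"
  proof -
    have "(\<Sum>j<8 * s. wQ j) = (\<Sum>j<8 * s. Kw s j - (-1)^j * Kw s j) / D"
      by (simp add: wQ_def sum_divide_distrib)
    also have "\<dots> = 1" using alt0 tot D0 by (simp add: sum_subtractf)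
    finally show ?thesis .
  qed
  have yab: "y j \<in> {a..b}" for j
  proof -
    have x1: "-1 \<le> xs s j" "xs s j \<le> 1" by (simp_all add: xs_def)
    have l1: "h * (-1) \<le> h * xs s j" using x1 h0 by (intro mult_left_mono) auto
    have l2: "h * xs s j \<le> h * 1" using x1 h0 by (intro mult_left_mono) auto
    have am: "a = m - h" "b = m + h" by (simp_all add: m_def h_def field_simps)
    show ?thesis using l1 l2 unfolding y_def am by simp
  qed
  define P where "P = distr (measure_pmf (embed_pmf wP)) borel y"
  define Q where "Q = distr (measure_pmf (embed_pmf wQ)) borel y"
  note dP = disc[where w=wP and N="8 * s" and y=y and a=a and b=b, OF wPn wPz wP1 yab, folded P_def]
  note dQ = disc[where w=wQ and N="8 * s" and y=y and a=a and b=b, OF wQn wQz wQ1 yab, folded Q_def]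
  have diffw: "wP j - wQ j = 2 * ((-1)^j * Kw s j) / D" if "j < 8 * s" for j
    using that D0 by (simp add: wP_def wQ_def field_simps)
  have mom: "(\<integral>x. x ^ l \<partial>P) = (\<integral>x. x ^ l \<partial>Q)" if l: "l \<le> s" for l
  proof -
    have "(\<integral>x. x ^ l \<partial>P) - (\<integral>x. x ^ l \<partial>Q) = (\<Sum>j<8 * s. (wP j - wQ j) * y j ^ l)"
      by (simp add: dP(4) dQ(4) sum_subtractf left_diff_distrib)
    also have "\<dots> = (\<Sum>j<8 * s. 2 / D * ((-1)^j * Kw s j * (m + h * xs s j) ^ l))"
      by (rule sum.cong[OF refl]) (simp add: diffw y_def)
    also have "\<dots> = 2 / D * (\<Sum>j<8 * s. (-1)^j * Kw s j * (m + h * xs s j) ^ l)"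
      by (simp add: sum_distrib_left)
    also have "\<dots> = 0" using momy[OF s l] by simp
    finally show ?thesis by simp
  qed
  define f where "f x = indicator {a..b} x *\<^sub>R \<bar>x - (a + b) / 2\<bar>" for x :: real
  have fm: "f \<in> borel_measurable borel" unfolding f_def by measurable
  have fy: "f (y j) = h * \<bar>xs s j\<bar>" for j
    using yab[of j] h0 by (simp add: f_def y_def m_def abs_mult)
  have eqP: "(\<integral>x\<in>{a..b}. \<bar>x - (a + b) / 2\<bar> \<partial>P) = (\<integral>x. f x \<partial>P)"
    unfolding set_lebesgue_integral_def f_def ..
  have eqQ: "(\<integral>x\<in>{a..b}. \<bar>x - (a + b) / 2\<bar> \<partial>Q) = (\<integral>x. f x \<partial>Q)"
    unfolding set_lebesgue_integral_def f_def ..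
  have "(\<integral>x. f x \<partial>P) - (\<integral>x. f x \<partial>Q) = (\<Sum>j<8 * s. (wP j - wQ j) * f (y j))"
    by (simp add: dP(4)[OF fm] dQ(4)[OF fm] sum_subtractf left_diff_distrib)
  also have "\<dots> = (\<Sum>j<8 * s. 2 * h / D * Fv s j)"
    by (rule sum.cong[OF refl]) (simp add: diffw fy Fv_def)
  also have "\<dots> = 2 * h / D * (\<Sum>j<8 * s. Fv s j)"
    by (simp add: sum_distrib_left)
  finally have dd: "(\<integral>x. f x \<partial>P) - (\<integral>x. f x \<partial>Q) = 2 * h / D * (\<Sum>j<8 * s. Fv s j)" .
  have hD: "0 \<le> 2 * h / D" using h0 D0 by simp
  have "2 * h / D * (\<Sum>j<8 * s. Fv s j) \<le> 2 * h / D * (- real s / (2 * pi))"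
    using S_bound[OF s] hD by (rule mult_left_mono)
  also have "2 * h / D * (- real s / (2 * pi)) = - ((b - a) / (32 * pi * real s))"
    using s by (simp add: h_def D_def field_simps power2_eq_square)
  finally have le: "(\<integral>x. f x \<partial>P) - (\<integral>x. f x \<partial>Q) \<le> - ((b - a) / (32 * pi * real s))"
    using dd by simp
  have "1 / 128 * (b - a) / real s \<le> (b - a) / (32 * pi * real s)"
  proof -
    have "32 * pi * real s \<le> 128 * real s" using pi_less_4 s by simp
    then show ?thesis using ab s by (simp add: frac_le)
  qed
  then have fin: "1 / 128 * (b - a) / real s \<le> \<bar>(\<integral>x. f x \<partial>P) - (\<integral>x. f x \<partial>Q)\<bar>"
    using le by linarith
  show ?thesis
  proof (rule exI[of _ P], rule exI[of _ Q], intro conjI)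
    show "prob_space P" by (rule dP(1))
    show "prob_space Q" by (rule dQ(1))
    show "sets P = sets borel" by (rule dP(2))
    show "sets Q = sets borel" by (rule dQ(2))
    show "measure P {a..b} = 1" by (rule dP(3))
    show "measure Q {a..b} = 1" by (rule dQ(3))
    show "\<forall>l\<le>s. (\<integral>x. x ^ l \<partial>P) = (\<integral>x. x ^ l \<partial>Q)" using mom by blast
    show "1 / 128 * (b - a) / real s \<le> \<bar>(\<integral>x\<in>{a..b}. \<bar>x - (a + b) / 2\<bar> \<partial>P) - (\<integral>x\<in>{a..b}. \<bar>x - (a + b) / 2\<bar> \<partial>Q)\<bar>"
      unfolding eqP eqQ by (rule fin)
  qed
qed

theorem proposition2:
  shows "\<exists>c::real. c > 0 \<and>
    (\<forall>(s::nat) (a::real) (b::real). 0 < s \<and> 0 < a \<and> a < b \<longrightarrow>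
      (\<exists>P Q :: real measure.
         prob_space P \<and> prob_space Q \<and>
         sets P = sets borel \<and> sets Q = sets borel \<and>
         measure P {a..b} = 1 \<and> measure Q {a..b} = 1 \<and>
         (\<forall>l\<le>s. (\<integral>x. x ^ l \<partial>P) = (\<integral>x. x ^ l \<partial>Q)) \<and>
         \<bar>(\<integral>x\<in>{a..b}. \<bar>x - (a + b) / 2\<bar> \<partial>P) - (\<integral>x\<in>{a..b}. \<bar>x - (a + b) / 2\<bar> \<partial>Q)\<bar>
           \<ge> c * (b - a) / real s))"
proof (intro exI[of _ "1 / 128"] conjI allI impI)
  show "(0::real) < 1 / 128" by simp
  fix s :: nat and a b :: real
  assume "0 < s \<and> 0 < a \<and> a < b"
  then show "\<exists>P Q :: real measure.
         prob_space P \<and> prob_space Q \<and>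
         sets P = sets borel \<and> sets Q = sets borel \<and>
         measure P {a..b} = 1 \<and> measure Q {a..b} = 1 \<and>
         (\<forall>l\<le>s. (\<integral>x. x ^ l \<partial>P) = (\<integral>x. x ^ l \<partial>Q)) \<and>
         \<bar>(\<integral>x\<in>{a..b}. \<bar>x - (a + b) / 2\<bar> \<partial>P) - (\<integral>x\<in>{a..b}. \<bar>x - (a + b) / 2\<bar> \<partial>Q)\<bar>
           \<ge> 1 / 128 * (b - a) / real s"
    using main by blast
qed

end
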